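(* Let $F\colon\Omega\to\Omega$ be a piecewise translation in $\mathbb{R}^d$ with $m=d+1$ branches, translation vectors $v_0,\dots,v_d$ with $v_1-v_0,\dots,v_d-v_0$ linearly independent, and suppose the torus rotation $R$ is ergodic. For $\phi\in\mathbb{T}$ let $\xi(\phi)=\#\big(\pi^{-1}(\phi)\cap A\big)$. Then $\xi$ is constant (and finite) for Lebesgue-almost every $\phi\in\mathbb{T}$.
   Context: A region is a compact subset of $\mathbb{R}^d$ which equals the closure of its interior. A piecewise translation with $m$ branches: $\Omega\subset\mathbb{R}^d$ is a region, $\Omega=P_0\cup\dots\cup P_{m-1}$ with each $P_i$ a region, distinct $P_i$ intersecting only in boundaries, $\mathrm{Leb}(\partial P_i)=0$; vectors $v_i$ satisfy $x+v_i\in\Omega$ for $x\in P_i$; $i(x)$ is an index with $x\in P_{i(x)}$ (boundary ambiguity resolved by a fixed measurable rule), and $F(x)=x+v_{i(x)}$. $\Omega_0=\Omega$, $\Omega_n=\overline{F(\Omega_{n-1})}$, $A=\bigcap_n\Omega_n$ is the attractor. $\mathcal{L}$ is the lattice generated by $v_1-v_0,\dots,v_d-v_0$, $\mathbb{T}=\mathbb{R}^d/\mathcal{L}$, $\pi\colon\mathbb{R}^d\to\mathbb{T}$ the projection, $R(\phi)=\phi+\pi(v_0)$ on $\mathbb{T}$. *)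

theory Defs
  imports "HOL-Analysis.Analysis"
begin

definition region :: "'a::euclidean_space set \<Rightarrow> bool" where
  "region S \<longleftrightarrow> compact S \<and> closure (interior S) = S"

definition piecewise_translation ::
  "'a::euclidean_space set \<Rightarrow> nat \<Rightarrow> (nat \<Rightarrow> 'a set) \<Rightarrow> (nat \<Rightarrow> 'a) \<Rightarrow> ('a \<Rightarrow> nat) \<Rightarrow> bool" where
  "piecewise_translation \<Omega> m P v idx \<longleftrightarrow>
     region \<Omega> \<and> \<Omega> = (\<Union>i<m. P i) \<and>
     (\<forall>i<m. region (P i)) \<and>
     (\<forall>i<m. \<forall>j<m. i \<noteq> j \<longrightarrow> P i \<inter> P j \<subseteq> frontier (P i) \<inter> frontier (P j)) \<and>
     (\<forall>i<m. frontier (P i) \<in> null_sets lebesgue) \<and>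
     (\<forall>i<m. \<forall>x\<in>P i. x + v i \<in> \<Omega>) \<and>
     (\<forall>x\<in>\<Omega>. idx x < m \<and> x \<in> P (idx x)) \<and>
     idx \<in> measurable lebesgue (count_space UNIV)"

definition pw_map :: "(nat \<Rightarrow> 'a::euclidean_space) \<Rightarrow> ('a \<Rightarrow> nat) \<Rightarrow> 'a \<Rightarrow> 'a" where
  "pw_map v idx x = x + v (idx x)"

definition Omega_n :: "('a::euclidean_space \<Rightarrow> 'a) \<Rightarrow> 'a set \<Rightarrow> nat \<Rightarrow> 'a set" where
  "Omega_n F \<Omega> n = ((\<lambda>S. closure (F ` S)) ^^ n) \<Omega>"

definition attractor :: "('a::euclidean_space \<Rightarrow> 'a) \<Rightarrow> 'a set \<Rightarrow> 'a set" where
  "attractor F \<Omega> = (\<Inter>n. Omega_n F \<Omega> n)"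

definition trans_lattice :: "nat \<Rightarrow> (nat \<Rightarrow> 'a::euclidean_space) \<Rightarrow> 'a set" where
  "trans_lattice d v = {\<Sum>i\<in>{1..d}. of_int (k i) *\<^sub>R (v i - v 0) | k. True}"

text \<open>Ergodicity of the rotation R(phi) = phi + pi(v_0) on T = R^d / L, w.r.t. Haar
  (normalised Lebesgue) measure, expressed via lifts to R^d: every Lebesgue measurable
  set that is L-periodic (i.e. of the form pi^{-1}(B)) and invariant under translation by v_0
  is null or conull.\<close>
definition rotation_ergodic :: "'a::euclidean_space set \<Rightarrow> 'a \<Rightarrow> bool" where
  "rotation_ergodic L w \<longleftrightarrow>
     (\<forall>E \<in> sets lebesgue. (\<forall>l\<in>L. (\<lambda>x. x + l) ` E = E) \<longrightarrow> (\<lambda>x. x + w) ` E = E \<longrightarrow>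
        E \<in> null_sets lebesgue \<or> (UNIV - E) \<in> null_sets lebesgue)"

text \<open>xi(pi(x)) = card (pi^{-1}(pi x) \<inter> A), lifted to R^d.\<close>
definition fiber :: "'a::euclidean_space set \<Rightarrow> 'a set \<Rightarrow> 'a \<Rightarrow> 'a set" where
  "fiber L A x = (\<lambda>l. x + l) ` L \<inter> A"

end

theory Submission imports Defs begin
locale coords =
  fixes v :: "nat \<Rightarrow> 'a::euclidean_space" and c :: "nat \<Rightarrow> 'a \<Rightarrow> real"
  assumes lin: "\<And>i. linear (c i)"
    and cb: "\<And>i j. i \<in> {1..DIM('a)} \<Longrightarrow> j \<in> {1..DIM('a)} \<Longrightarrow> c i (v j - v 0) = (if i = j then 1 else 0)"
    and rep: "\<And>x. x = (\<Sum>i\<in>{1..DIM('a)}. c i x *\<^sub>R (v i - v 0))"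
begin

abbreviation "LL \<equiv> trans_lattice DIM('a) v"

lemma L_mem: "(\<Sum>i\<in>{1..DIM('a)}. of_int (k i) *\<^sub>R (v i - v 0)) \<in> LL"
  unfolding trans_lattice_def by blast

lemma L_add: assumes "x \<in> LL" "y \<in> LL" shows "x + y \<in> LL"
proof -
  obtain k where k: "x = (\<Sum>i\<in>{1..DIM('a)}. of_int (k i) *\<^sub>R (v i - v 0))"
    using assms(1) unfolding trans_lattice_def by blast
  obtain k' where k': "y = (\<Sum>i\<in>{1..DIM('a)}. of_int (k' i) *\<^sub>R (v i - v 0))"
    using assms(2) unfolding trans_lattice_def by blast
  have "x + y = (\<Sum>i\<in>{1..DIM('a)}. of_int (k i + k' i) *\<^sub>R (v i - v 0))"
    unfolding k k' by (simp add: sum.distrib scaleR_add_left)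
  then show ?thesis using L_mem by metis
qed

lemma L_uminus: assumes "x \<in> LL" shows "- x \<in> LL"
proof -
  obtain k where k: "x = (\<Sum>i\<in>{1..DIM('a)}. of_int (k i) *\<^sub>R (v i - v 0))"
    using assms(1) unfolding trans_lattice_def by blast
  have "- x = (\<Sum>i\<in>{1..DIM('a)}. of_int (- k i) *\<^sub>R (v i - v 0))"
    unfolding k by (simp add: sum_negf)
  then show ?thesis using L_mem by metis
qed

lemma L_diff: "x \<in> LL \<Longrightarrow> y \<in> LL \<Longrightarrow> x - y \<in> LL"
  using L_add[of x "- y"] L_uminus[of y] by simp

lemma L_zero: "0 \<in> LL"
  using L_mem[of "\<lambda>_. 0"] by simp

lemma L_b: assumes "i \<le> DIM('a)" shows "v i - v 0 \<in> LL"
proof (cases "i = 0")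
  case True then show ?thesis using L_zero by simp
next
  case False
  then have i: "i \<in> {1..DIM('a)}" using assms by auto
  have "(\<Sum>j\<in>{1..DIM('a)}. of_int (if j = i then 1 else 0) *\<^sub>R (v j - v 0)) = 
        (\<Sum>j\<in>{1..DIM('a)}. (if j = i then v j - v 0 else 0))"
    by (rule sum.cong) auto
  also have "\<dots> = v i - v 0" using i by simp
  finally show ?thesis using L_mem by metis
qed

lemma coord_sum: assumes "j \<in> {1..DIM('a)}"
  shows "c j (\<Sum>i\<in>{1..DIM('a)}. r i *\<^sub>R (v i - v 0)) = r j"
proof -
  have "c j (\<Sum>i\<in>{1..DIM('a)}. r i *\<^sub>R (v i - v 0)) = (\<Sum>i\<in>{1..DIM('a)}. r i * c j (v i - v 0))"
    by (simp add: linear_sum[OF lin] linear_scale[OF lin])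
  also have "\<dots> = (\<Sum>i\<in>{1..DIM('a)}. if i = j then r i else 0)"
  proof (rule sum.cong)
    fix i assume i: "i \<in> {1..DIM('a)}"
    show "r i * c j (v i - v 0) = (if i = j then r i else 0)" using cb[OF assms i] by auto
  qed simp
  also have "\<dots> = r j" using assms by simp
  finally show ?thesis .
qed

lemma L_coord: assumes "l \<in> LL" "j \<in> {1..DIM('a)}" shows "c j l \<in> \<int>"
proof -
  obtain k where k: "l = (\<Sum>i\<in>{1..DIM('a)}. of_int (k i) *\<^sub>R (v i - v 0))"
    using assms(1) unfolding trans_lattice_def by blast
  show ?thesis unfolding k coord_sum[OF assms(2)] by simp
qed

lemma coord_eq: assumes "\<And>j. j \<in> {1..DIM('a)} \<Longrightarrow> c j x = c j y" shows "x = y"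
  by (subst rep, subst (2) rep) (rule sum.cong, auto simp: assms)

lemma L_countable: "countable LL"
proof -
  have sub: "LL \<subseteq> (\<lambda>k. \<Sum>i\<in>{1..DIM('a)}. of_int (k i) *\<^sub>R (v i - v 0)) ` (Pi\<^sub>E {1..DIM('a)} (\<lambda>_. UNIV))"
  proof
    fix x assume "x \<in> LL"
    then obtain k where k: "x = (\<Sum>i\<in>{1..DIM('a)}. of_int (k i) *\<^sub>R (v i - v 0))"
      unfolding trans_lattice_def by blast
    have "x = (\<Sum>i\<in>{1..DIM('a)}. of_int (restrict k {1..DIM('a)} i) *\<^sub>R (v i - v 0))"
      unfolding k by (rule sum.cong) auto
    then show "x \<in> (\<lambda>k. \<Sum>i\<in>{1..DIM('a)}. of_int (k i) *\<^sub>R (v i - v 0)) ` (Pi\<^sub>E {1..DIM('a)} (\<lambda>_. UNIV))"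
      by (intro image_eqI[where x="restrict k {1..DIM('a)}"]) auto
  qed
  have cnt: "countable (Pi\<^sub>E {1..DIM('a)} (\<lambda>_. UNIV :: int set))"
    by (rule countable_PiE) auto
  show ?thesis by (rule countable_subset[OF sub countable_image[OF cnt]])
qed

lemma L_finite_cball: "finite (LL \<inter> cball 0 R)"
proof -
  define N where "N i = \<lceil>onorm (c i) * R\<rceil>" for i
  have bl: "bounded_linear (c i)" for i using lin linear_conv_bounded_linear by blast
  have sub: "LL \<inter> cball 0 R \<subseteq> (\<lambda>k. \<Sum>i\<in>{1..DIM('a)}. of_int (k i) *\<^sub>R (v i - v 0)) ` (Pi\<^sub>E {1..DIM('a)} (\<lambda>i. {- N i..N i}))"
  proof
    fix l assume l: "l \<in> LL \<inter> cball 0 R"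
    define k where "k = restrict (\<lambda>i. \<lfloor>c i l\<rfloor>) {1..DIM('a)}"
    have ck: "of_int (k i) = c i l" if "i \<in> {1..DIM('a)}" for i
      using L_coord[of l i] l that unfolding k_def by (auto elim!: Ints_cases)
    have "l = (\<Sum>i\<in>{1..DIM('a)}. of_int (k i) *\<^sub>R (v i - v 0))"
      by (subst rep) (rule sum.cong, auto simp: ck)
    moreover have "k \<in> Pi\<^sub>E {1..DIM('a)} (\<lambda>i. {- N i..N i})"
    proof -
      have "k i \<in> {- N i..N i}" if i: "i \<in> {1..DIM('a)}" for i
      proof -
        have "\<bar>c i l\<bar> \<le> onorm (c i) * norm l" using onorm[OF bl] by (metis real_norm_def)
        also have "\<dots> \<le> onorm (c i) * R" using l onorm_pos_le[OF bl] by (auto intro: mult_left_mono)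
        finally have "\<bar>of_int (k i)\<bar> \<le> onorm (c i) * R" using ck[OF i] by simp
        then have h: "real_of_int (k i) \<le> real_of_int (N i)" "- real_of_int (N i) \<le> real_of_int (k i)"
          unfolding N_def using le_of_int_ceiling[of "onorm (c i) * R"] by linarith+
        then show ?thesis by simp
      qed
      then show ?thesis unfolding k_def by auto
    qed
    ultimately show "l \<in> (\<lambda>k. \<Sum>i\<in>{1..DIM('a)}. of_int (k i) *\<^sub>R (v i - v 0)) ` (Pi\<^sub>E {1..DIM('a)} (\<lambda>i. {- N i..N i}))"
      by blast
  qed
  have fin: "finite (Pi\<^sub>E {1..DIM('a)} (\<lambda>i. {- N i..N i}))"
    by (rule finite_PiE) auto
  show ?thesis by (rule finite_subset[OF sub finite_imageI[OF fin]])
qed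

definition D where "D = {x. \<forall>i\<in>{1..DIM('a)}. 0 \<le> c i x \<and> c i x < 1}"

lemma tile_ex: "\<exists>l\<in>LL. x - l \<in> D"
proof
  define l where "l = (\<Sum>i\<in>{1..DIM('a)}. of_int \<lfloor>c i x\<rfloor> *\<^sub>R (v i - v 0))"
  show "l \<in> LL" unfolding l_def by (rule L_mem)
  have "c j (x - l) = c j x - of_int \<lfloor>c j x\<rfloor>" if "j \<in> {1..DIM('a)}" for j
    using linear_diff[OF lin] coord_sum[OF that] unfolding l_def by simp
  moreover have "0 \<le> y - of_int \<lfloor>y\<rfloor> \<and> y - of_int \<lfloor>y\<rfloor> < 1" for y :: real
    using floor_correct[of y] by linarith
  ultimately show "x - l \<in> D" unfolding D_def by simp
qed

lemma tile_uniq: assumes "l \<in> LL" "l' \<in> LL" "x - l \<in> D" "x - l' \<in> D" shows "l = l'"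
proof (rule coord_eq)
  fix j assume j: "j \<in> {1..DIM('a)}"
  have fl: "c j m = of_int \<lfloor>c j x\<rfloor>" if m: "m \<in> LL" and md: "x - m \<in> D" for m
  proof -
    obtain z where z: "c j m = of_int z" using L_coord[OF m j] by (auto elim!: Ints_cases)
    have "0 \<le> c j x - c j m" "c j x - c j m < 1"
      using md j linear_diff[OF lin] unfolding D_def by auto
    then have "\<lfloor>c j x\<rfloor> = z" using z by (intro floor_unique) auto
    then show ?thesis using z by simp
  qed
  show "c j l = c j l'" using fl[OF assms(1,3)] fl[OF assms(2,4)] by simp
qed

lemma D_borel: "D \<in> sets borel"
proof -
  have [measurable]: "c i \<in> borel_measurable borel" for i
    using lin by (intro borel_measurable_continuous_onI linear_continuous_on) (simp add: linear_conv_bounded_linear)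
  show ?thesis unfolding D_def by measurable
qed

lemma D_bounded: "bounded D"
proof -
  have "norm x \<le> (\<Sum>i\<in>{1..DIM('a)}. norm (v i - v 0))" if "x \<in> D" for x
  proof -
    have "norm x = norm (\<Sum>i\<in>{1..DIM('a)}. c i x *\<^sub>R (v i - v 0))" by (subst rep) simp
    also have "\<dots> \<le> (\<Sum>i\<in>{1..DIM('a)}. norm (c i x *\<^sub>R (v i - v 0)))" by (rule norm_sum)
    also have "\<dots> \<le> (\<Sum>i\<in>{1..DIM('a)}. norm (v i - v 0))"
    proof (intro sum_mono)
      fix i assume i: "i \<in> {1..DIM('a)}"
      have "0 \<le> c i x \<and> c i x < 1" using that i unfolding D_def by blast
      then have "\<bar>c i x\<bar> \<le> 1" by auto
      then show "norm (c i x *\<^sub>R (v i - v 0)) \<le> norm (v i - v 0)"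
        using mult_left_le_one_le[of "norm (v i - v 0)" "\<bar>c i x\<bar>"] by simp
    qed
    finally show ?thesis .
  qed
  then show ?thesis unfolding bounded_iff by blast
qed

lemma D_fin: "emeasure lebesgue D < \<infinity>"
  using bounded_set_imp_lmeasurable[OF D_bounded] D_borel
  by (auto simp: fmeasurable_def)

end

lemma emeasure_transl: "emeasure lebesgue ((\<lambda>x. x + a) ` S) = emeasure lebesgue (S::'a::euclidean_space set)"
  using emeasure_lebesgue_affine[of 1 a S] by simp

lemma borel_leb: "S \<in> sets borel \<Longrightarrow> S \<in> sets lebesgue"
  by (metis sets_completionI_sets sets_lborel)

lemma null_transl:
  fixes N :: "'a::euclidean_space set"
  assumes N: "N \<in> null_sets lebesgue" shows "{x. x + a \<in> N} \<in> null_sets lebesgue"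
proof -
  have eq: "{x. x + a \<in> N} = (\<lambda>x. x + - a) ` N"
  proof safe
    fix x assume "x + a \<in> N" then show "x \<in> (\<lambda>x. x + - a) ` N" by (intro image_eqI[where x="x+a"]) auto
  qed auto
  have "(\<lambda>x. - a + x) ` N \<in> sets lebesgue" using lebesgue_sets_translation[of N "-a"] N by auto
  then have s: "(\<lambda>x. x + - a) ` N \<in> sets lebesgue" by (simp add: add.commute)
  have "emeasure lebesgue ((\<lambda>x. x + - a) ` N) = 0" using emeasure_transl[of "-a" N] N by auto
  then show ?thesis using s unfolding eq by (simp add: null_sets_def)
qed

lemma borel_transl: fixes S :: "'a::euclidean_space set" shows "S \<in> sets borel \<Longrightarrow> {x. x + a \<in> S} \<in> sets borel"
proof -
  assume S: "S \<in> sets borel"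
  have "(\<lambda>x. x + a) \<in> borel_measurable borel" by (intro borel_measurable_continuous_onI continuous_on_add continuous_on_id continuous_on_const)
  from measurable_sets[OF this S] show ?thesis by (simp add: vimage_def)
qed

lemma borel_transl_sub: fixes S :: "'a::euclidean_space set" shows "S \<in> sets borel \<Longrightarrow> {x. x - a \<in> S} \<in> sets borel"
proof -
  assume S: "S \<in> sets borel"
  have "(\<lambda>x. x - a) \<in> borel_measurable borel" by (intro borel_measurable_continuous_onI continuous_on_diff continuous_on_id continuous_on_const)
  from measurable_sets[OF this S] show ?thesis by (simp add: vimage_def)
qed

context coords begin

lemma tile_set: "{x. x - u - l \<in> D} \<in> sets lebesgue"
proof -
  have "{x. x - u - l \<in> D} = {x. x - (u + l) \<in> D}" by (auto simp: diff_diff_eq)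
  then show ?thesis using borel_transl_sub[OF D_borel, of "u+l"] borel_leb by metis
qed

lemma partition:
  assumes "S \<in> sets lebesgue"
  shows "emeasure lebesgue S = (\<integral>\<^sup>+l. emeasure lebesgue (S \<inter> {x. x - u - l \<in> D}) \<partial>count_space LL)"
proof -
  have eq: "(\<Union>l\<in>LL. S \<inter> {x. x - u - l \<in> D}) = S"
  proof safe
    fix x assume "x \<in> S"
    obtain l where "l \<in> LL" "x - u - l \<in> D" using tile_ex[of "x - u"] by blast
    then show "x \<in> (\<Union>l\<in>LL. S \<inter> {x. x - u - l \<in> D})" using \<open>x \<in> S\<close> by blast
  qed
  have "emeasure lebesgue (\<Union>l\<in>LL. S \<inter> {x. x - u - l \<in> D}) = (\<integral>\<^sup>+l. emeasure lebesgue (S \<inter> {x. x - u - l \<in> D}) \<partial>count_space LL)"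
  proof (rule emeasure_UN_countable)
    show "disjoint_family_on (\<lambda>l. S \<inter> {x. x - u - l \<in> D}) LL"
      unfolding disjoint_family_on_def using tile_uniq by blast
  qed (auto intro: sets.Int assms tile_set L_countable)
  then show ?thesis using eq by simp
qed

lemma shift_inv:
  assumes E: "E \<in> sets lebesgue" and per: "\<And>l x. l \<in> LL \<Longrightarrow> (x + l \<in> E) = (x \<in> E)"
  shows "emeasure lebesgue ({x. x - w \<in> E} \<inter> D) = emeasure lebesgue (E \<inter> D)"
proof -
  define E' where "E' = {x. x - w \<in> E}"
  have E'eq: "E' = (\<lambda>x. w + x) ` E"
    unfolding E'_def
  proof safe
    fix x assume "x - w \<in> E" then show "x \<in> (\<lambda>x. w + x) ` E" by (intro image_eqI[where x="x - w"]) auto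
  qed auto
  have E': "E' \<in> sets lebesgue" using lebesgue_sets_translation[OF E, of w] E'eq by simp
  have D: "D \<in> sets lebesgue" using D_borel borel_leb by blast
  have "emeasure lebesgue (E \<inter> D) = (\<integral>\<^sup>+l. emeasure lebesgue (E \<inter> D \<inter> {x. x - - w - l \<in> D}) \<partial>count_space LL)"
    by (rule partition) (intro sets.Int E D)
  also have "\<dots> = (\<integral>\<^sup>+l. emeasure lebesgue (E' \<inter> D \<inter> {x. x - w - - l \<in> D}) \<partial>count_space LL)"
  proof (rule nn_integral_cong)
    fix l assume "l \<in> space (count_space LL)" then have l: "l \<in> LL" by simp
    have "(\<lambda>x. x + (w - l)) ` (E \<inter> D \<inter> {x. x - - w - l \<in> D}) = E' \<inter> D \<inter> {x. x - w - - l \<in> D}"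
    proof (rule set_eqI, rule iffI)
      fix y assume "y \<in> (\<lambda>x. x + (w - l)) ` (E \<inter> D \<inter> {x. x - - w - l \<in> D})"
      then obtain x where x: "x \<in> E" "x \<in> D" "x + w - l \<in> D" and y: "y = x + (w - l)" by auto
      have xl: "x - l \<in> E" using per[of l "x - l"] l x by simp
      have e1: "y - w = x - l" and e2: "y = x + w - l" and e3: "y - w - - l = x" using y by (auto simp: algebra_simps)
      have "y \<in> D" using x(3) e2 by simp
      then show "y \<in> E' \<inter> D \<inter> {x. x - w - - l \<in> D}" unfolding E'_def using xl x(2) e1 e3 by simp
    next
      fix y assume "y \<in> E' \<inter> D \<inter> {x. x - w - - l \<in> D}"
      then have y: "y - w \<in> E" "y \<in> D" "y - w + l \<in> D" unfolding E'_def by auto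
      have "y - w + l \<in> E" using per[of l "y - w"] l y by simp
      then show "y \<in> (\<lambda>x. x + (w - l)) ` (E \<inter> D \<inter> {x. x - - w - l \<in> D})"
        using y by (intro image_eqI[where x="y - w + l"]) (auto simp: algebra_simps)
    qed
    then show "emeasure lebesgue (E \<inter> D \<inter> {x. x - - w - l \<in> D}) = emeasure lebesgue (E' \<inter> D \<inter> {x. x - w - - l \<in> D})"
      using emeasure_transl by metis
  qed
  also have "\<dots> = (\<integral>\<^sup>+l. emeasure lebesgue (E' \<inter> D \<inter> {x. x - w - l \<in> D}) \<partial>count_space LL)"
  proof (rule nn_integral_bij_count_space[where g = uminus])
    show "bij_betw uminus LL LL"
      by (rule bij_betwI[where g = uminus]) (auto intro: L_uminus)
  qed
  also have "\<dots> = emeasure lebesgue (E' \<inter> D)" by (rule partition[symmetric]) (intro sets.Int E' D)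
  finally show ?thesis unfolding E'_def by simp
qed

lemma diff_null:
  assumes E: "E \<in> sets lebesgue" and G: "G \<in> sets lebesgue"
    and perE: "\<And>l x. l \<in> LL \<Longrightarrow> (x + l \<in> E) = (x \<in> E)"
    and perG: "\<And>l x. l \<in> LL \<Longrightarrow> (x + l \<in> G) = (x \<in> G)"
    and GE: "G - E \<in> null_sets lebesgue"
    and eq: "emeasure lebesgue (G \<inter> D) = emeasure lebesgue (E \<inter> D)"
  shows "E - G \<in> null_sets lebesgue"
proof -
  have D: "D \<in> sets lebesgue" using D_borel borel_leb by blast
  have "emeasure lebesgue (E \<inter> G \<inter> D) \<le> emeasure lebesgue D"
    by (rule emeasure_mono) (auto simp: D)
  then have fin: "emeasure lebesgue (E \<inter> G \<inter> D) \<noteq> \<infinity>" using D_fin by auto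
  have split: "emeasure lebesgue (E \<inter> G \<inter> D) + emeasure lebesgue ((E - G) \<inter> D) = emeasure lebesgue (E \<inter> D)"
  proof -
    have "emeasure lebesgue (E \<inter> G \<inter> D) + emeasure lebesgue ((E - G) \<inter> D)
          = emeasure lebesgue ((E \<inter> G \<inter> D) \<union> ((E - G) \<inter> D))"
      by (rule plus_emeasure) (auto intro: sets.Int sets.Diff E G D)
    also have "(E \<inter> G \<inter> D) \<union> ((E - G) \<inter> D) = E \<inter> D" by blast
    finally show ?thesis .
  qed
  have "emeasure lebesgue (G \<inter> D) \<le> emeasure lebesgue ((E \<inter> G \<inter> D) \<union> (G - E))"
    by (rule emeasure_mono) (auto intro!: sets.Un sets.Int E G D sets.Diff)
  also have "\<dots> = emeasure lebesgue (E \<inter> G \<inter> D)"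
    by (rule emeasure_Un_null_set) (auto intro: sets.Int E G D GE)
  finally have "emeasure lebesgue (E \<inter> G \<inter> D) + emeasure lebesgue ((E - G) \<inter> D) \<le> emeasure lebesgue (E \<inter> G \<inter> D) + 0"
    using split eq by simp
  then have "emeasure lebesgue ((E - G) \<inter> D) = 0" using fin ennreal_add_left_cancel_le by auto
  then have nullD: "(E - G) \<inter> D \<in> null_sets lebesgue"
    by (auto simp: null_sets_def intro: sets.Int sets.Diff E G D)
  have seq: "E - G = (\<Union>l\<in>LL. {x. x + - l \<in> (E - G) \<inter> D})"
  proof safe
    fix x assume x: "x \<in> E" "x \<notin> G"
    obtain l where l: "l \<in> LL" "x - l \<in> D" using tile_ex[of x] by blast
    have "x - l \<in> E" "x - l \<notin> G" using perE[of l "x - l"] perG[of l "x - l"] l x by auto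
    then show "x \<in> (\<Union>l\<in>LL. {x. x + - l \<in> (E - G) \<inter> D})" using l by auto
  next
    fix x l assume "l \<in> LL" "x + - l \<in> E"
    then show "x \<in> E" using perE[of l "x - l"] by simp
  next
    fix x l assume "l \<in> LL" "x + - l \<notin> G" "x \<in> G"
    then show False using perG[of l "x - l"] by simp
  qed
  have "(\<Union>l\<in>LL. {x. x + - l \<in> (E - G) \<inter> D}) \<in> null_sets lebesgue"
    by (rule null_sets_UN'[OF L_countable]) (rule null_transl[OF nullD])
  then show ?thesis using seq by simp
qed

end

lemma coords_exist:
  fixes v :: "nat \<Rightarrow> 'a::euclidean_space"
  assumes ind: "independent ((\<lambda>i. v i - v 0) ` {1..DIM('a)})"
    and inj: "inj_on (\<lambda>i. v i - v 0) {1..DIM('a)}"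
  obtains c :: "nat \<Rightarrow> 'a \<Rightarrow> real" where "\<And>i. linear (c i)"
    "\<And>i j. i \<in> {1..DIM('a)} \<Longrightarrow> j \<in> {1..DIM('a)} \<Longrightarrow> c i (v j - v 0) = (if i = j then 1 else 0)"
    "\<And>x. x = (\<Sum>i\<in>{1..DIM('a)}. c i x *\<^sub>R (v i - v 0))"
proof -
  define b where "b i = v i - v 0" for i
  define B where "B = b ` {1..DIM('a)}"
  have "\<forall>i. \<exists>g::'a\<Rightarrow>real. linear g \<and> (\<forall>x\<in>B. g x = (if x = b i then 1 else 0))"
  proof
    fix i
    have "independent B" using ind unfolding B_def b_def by simp
    then show "\<exists>g::'a\<Rightarrow>real. linear g \<and> (\<forall>x\<in>B. g x = (if x = b i then 1 else 0))"
      by (rule real_vector.linear_independent_extend)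
  qed
  then have "\<exists>c::nat \<Rightarrow> 'a \<Rightarrow> real. \<forall>i. linear (c i) \<and> (\<forall>x\<in>B. c i x = (if x = b i then 1 else 0))"
    by (rule choice)
  then obtain c :: "nat \<Rightarrow> 'a \<Rightarrow> real" where cc: "\<forall>i. linear (c i) \<and> (\<forall>x\<in>B. c i x = (if x = b i then 1 else 0))"
    by blast
  have c1: "linear (c i)" for i using cc by blast
  have c2: "c i x = (if x = b i then 1 else 0)" if "x \<in> B" for i x using cc that by blast
  have cb: "c i (b j) = (if i = j then 1 else 0)" if "i \<in> {1..DIM('a)}" "j \<in> {1..DIM('a)}" for i j
  proof -
    have bj: "b j \<in> B" using that(2) unfolding B_def by blast
    have e: "(b j = b i) = (j = i)" using inj_on_eq_iff[OF inj that(2) that(1)] unfolding b_def by simp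
    show ?thesis using c2[OF bj, of i] e by auto
  qed
  have span: "span B = UNIV"
  proof -
    have "card B = DIM('a)" unfolding B_def b_def using inj by (simp add: card_image)
    then have "UNIV \<subseteq> span B"
      using eucl.card_ge_dim_independent[of B UNIV] ind by (simp add: B_def b_def dim_UNIV)
    then show ?thesis by auto
  qed
  have lin: "linear (\<lambda>x. \<Sum>i\<in>{1..DIM('a)}. c i x *\<^sub>R b i)"
    by (intro linearI) (simp_all add: linear_add[OF c1] linear_scale[OF c1] scaleR_add_left sum.distrib scaleR_sum_right)
  have rep: "x = (\<Sum>i\<in>{1..DIM('a)}. c i x *\<^sub>R b i)" for x
  proof -
    have "id x = (\<Sum>i\<in>{1..DIM('a)}. c i x *\<^sub>R b i)"
    proof (rule linear_eq_on_span[OF linear_id lin])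
      fix y assume "y \<in> B"
      then obtain j where j: "j \<in> {1..DIM('a)}" "y = b j" unfolding B_def by auto
      have "(\<Sum>i\<in>{1..DIM('a)}. c i y *\<^sub>R b i) = (\<Sum>i\<in>{1..DIM('a)}. (if i = j then b i else 0))"
        using j cb by (intro sum.cong) auto
      also have "\<dots> = b j" using j by simp
      finally show "id y = (\<Sum>i\<in>{1..DIM('a)}. c i y *\<^sub>R b i)" using j by simp
    qed (simp add: span)
    then show ?thesis by simp
  qed
  show ?thesis
  proof (rule that[OF c1])
    fix i j assume "i \<in> {1..DIM('a)}" "j \<in> {1..DIM('a)}"
    then show "c i (v j - v 0) = (if i = j then 1 else 0)" using cb[of i j] by (simp add: b_def)
  next
    fix x show "x = (\<Sum>i\<in>{1..DIM('a)}. c i x *\<^sub>R (v i - v 0))" using rep[of x] by (simp add: b_def)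
  qed
qed

lemma Omega_Suc: "Omega_n F \<Omega> (Suc n) = closure (F ` Omega_n F \<Omega> n)"
  by (simp add: Omega_n_def)

lemma Omega_0: "Omega_n F \<Omega> 0 = \<Omega>"
  by (simp add: Omega_n_def)

lemma Omega_dec:
  assumes "closed \<Omega>" "F ` \<Omega> \<subseteq> \<Omega>"
  shows "Omega_n F \<Omega> (Suc n) \<subseteq> Omega_n F \<Omega> n"
proof (induction n)
  case 0 show ?case using assms by (simp add: Omega_Suc Omega_0 closure_minimal)
next
  case (Suc n)
  have "Omega_n F \<Omega> (Suc (Suc n)) = closure (F ` Omega_n F \<Omega> (Suc n))" by (rule Omega_Suc)
  moreover have "Omega_n F \<Omega> (Suc n) = closure (F ` Omega_n F \<Omega> n)" by (rule Omega_Suc)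
  ultimately show ?case using Suc.IH by (metis closure_mono image_mono)
qed

lemma Omega_anti:
  assumes "closed \<Omega>" "F ` \<Omega> \<subseteq> \<Omega>" "m \<le> n"
  shows "Omega_n F \<Omega> n \<subseteq> Omega_n F \<Omega> m"
  using lift_Suc_antimono_le[of "Omega_n F \<Omega>", OF Omega_dec[OF assms(1,2)] assms(3)] .

lemma Omega_closed: "closed \<Omega> \<Longrightarrow> closed (Omega_n F \<Omega> n)"
  by (cases n) (simp_all add: Omega_0 Omega_Suc)

lemma image_transl_eq:
  fixes W :: "'a::ab_group_add set"
  assumes "\<And>x. (x + a \<in> W) = (x \<in> W)" shows "(\<lambda>x. x + a) ` W = W"
proof safe
  fix x assume "x \<in> W"
  then have "x - a \<in> W" using assms[of "x - a"] by simp
  then show "x \<in> (\<lambda>x. x + a) ` W" by (intro image_eqI[where x="x - a"]) auto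
qed (use assms in auto)

theorem theorem2p2:
  fixes \<Omega> :: "'a::euclidean_space set"
    and P :: "nat \<Rightarrow> 'a set" and v :: "nat \<Rightarrow> 'a" and idx :: "'a \<Rightarrow> nat"
  assumes "piecewise_translation \<Omega> (DIM('a) + 1) P v idx"
    and "independent ((\<lambda>i. v i - v 0) ` {1..DIM('a)})"
    and "inj_on (\<lambda>i. v i - v 0) {1..DIM('a)}"
    and "rotation_ergodic (trans_lattice DIM('a) v) (v 0)"
  shows "\<exists>c::nat. AE x in lebesgue.
           finite (fiber (trans_lattice DIM('a) v) (attractor (pw_map v idx) \<Omega>) x) \<and>
           card (fiber (trans_lattice DIM('a) v) (attractor (pw_map v idx) \<Omega>) x) = c"
proof -
  define m where "m = DIM('a) + 1"
  define F where "F = pw_map v idx"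
  define A where "A = attractor F \<Omega>"
  have pt: "piecewise_translation \<Omega> m P v idx" using assms(1) m_def by simp
  have r1: "region \<Omega>" using pt unfolding piecewise_translation_def by (elim conjE) assumption
  have r3: "\<forall>i<m. region (P i)" using pt unfolding piecewise_translation_def by (elim conjE) assumption
  have r4: "\<forall>i<m. \<forall>j<m. i \<noteq> j \<longrightarrow> P i \<inter> P j \<subseteq> frontier (P i) \<inter> frontier (P j)"
    using pt unfolding piecewise_translation_def by (elim conjE) assumption
  have r5: "\<forall>i<m. frontier (P i) \<in> null_sets lebesgue"
    using pt unfolding piecewise_translation_def by (elim conjE) assumption
  have r6: "\<forall>i<m. \<forall>x\<in>P i. x + v i \<in> \<Omega>"
    using pt unfolding piecewise_translation_def by (elim conjE) assumption
  have r7: "\<forall>x\<in>\<Omega>. idx x < m \<and> x \<in> P (idx x)"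
    using pt unfolding piecewise_translation_def by (elim conjE) assumption
  have c\<Omega>: "compact \<Omega>" using r1 unfolding region_def by (elim conjE)
  have Pc: "\<And>i. i < m \<Longrightarrow> compact (P i)" using r3 unfolding region_def by simp
  have Pdisj: "\<And>i j. i < m \<Longrightarrow> j < m \<Longrightarrow> i \<noteq> j \<Longrightarrow> P i \<inter> P j \<subseteq> frontier (P i) \<inter> frontier (P j)"
    using r4 by simp
  have fr: "\<And>i. i < m \<Longrightarrow> frontier (P i) \<in> null_sets lebesgue" using r5 by simp
  have vin: "\<And>i x. i < m \<Longrightarrow> x \<in> P i \<Longrightarrow> x + v i \<in> \<Omega>" using r6 by simp
  have idx: "\<And>x. x \<in> \<Omega> \<Longrightarrow> idx x < m \<and> x \<in> P (idx x)" using r7 by simp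
  obtain c where c: "\<And>i. linear (c i)"
    "\<And>i j. i \<in> {1..DIM('a)} \<Longrightarrow> j \<in> {1..DIM('a)} \<Longrightarrow> c i (v j - v 0) = (if i = j then 1 else 0)"
    "\<And>x. x = (\<Sum>i\<in>{1..DIM('a)}. c i x *\<^sub>R (v i - v 0))"
    using coords_exist[OF assms(2) assms(3)] by blast
  have "coords v c" unfolding coords_def using c by blast
  then interpret coords v c .
  have cl\<Omega>: "closed \<Omega>" using c\<Omega> compact_imp_closed by blast
  have F\<Omega>: "F ` \<Omega> \<subseteq> \<Omega>" unfolding F_def pw_map_def using idx vin by auto
  have Aom: "\<And>n. A \<subseteq> Omega_n F \<Omega> n" unfolding A_def attractor_def by auto
  have A\<Omega>: "A \<subseteq> \<Omega>" using Aom[of 0] by (simp add: Omega_0)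
  have clA: "closed A" unfolding A_def attractor_def using Omega_closed[OF cl\<Omega>] by blast
  obtain R where R: "\<And>a. a \<in> A \<Longrightarrow> norm a \<le> R"
    using compact_imp_bounded[OF c\<Omega>] A\<Omega> unfolding bounded_iff by blast
  have pre: "\<exists>i<m. a - v i \<in> A \<and> a - v i \<in> P i" if a: "a \<in> A" for a
  proof (rule ccontr)
    assume nt: "\<not> (\<exists>i<m. a - v i \<in> A \<and> a - v i \<in> P i)"
    have "\<forall>i<m. \<exists>n. a - v i \<notin> Omega_n F \<Omega> n \<inter> P i"
    proof (intro allI impI)
      fix i assume "i < m"
      with nt have "\<not> (a - v i \<in> A \<and> a - v i \<in> P i)" by blast
      then show "\<exists>n. a - v i \<notin> Omega_n F \<Omega> n \<inter> P i" unfolding A_def attractor_def by blast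
    qed
    then obtain nn where nn: "\<And>i. i < m \<Longrightarrow> a - v i \<notin> Omega_n F \<Omega> (nn i) \<inter> P i" by metis
    define K where "K = (\<Sum>i<m. nn i)"
    have closedU: "closed (\<Union>i<m. (\<lambda>x. v i + x) ` (Omega_n F \<Omega> K \<inter> P i))"
    proof (rule closed_UN)
      show "\<forall>i\<in>{..<m}. closed ((\<lambda>x. v i + x) ` (Omega_n F \<Omega> K \<inter> P i))"
        using Omega_closed[OF cl\<Omega>] Pc compact_imp_closed by (auto intro!: closed_translation closed_Int)
    qed simp
    have "F ` Omega_n F \<Omega> K \<subseteq> (\<Union>i<m. (\<lambda>x. v i + x) ` (Omega_n F \<Omega> K \<inter> P i))"
    proof
      fix y assume "y \<in> F ` Omega_n F \<Omega> K"
      then obtain x where x: "x \<in> Omega_n F \<Omega> K" "y = F x" by auto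
      have "x \<in> \<Omega>" using x Omega_anti[OF cl\<Omega> F\<Omega>, of 0 K] by (auto simp: Omega_0)
      then have "idx x < m" "x \<in> P (idx x)" using idx by auto
      then show "y \<in> (\<Union>i<m. (\<lambda>x. v i + x) ` (Omega_n F \<Omega> K \<inter> P i))"
        using x unfolding F_def pw_map_def by (intro UN_I[of "idx x"]) (auto simp: add.commute)
    qed
    then have "Omega_n F \<Omega> (Suc K) \<subseteq> (\<Union>i<m. (\<lambda>x. v i + x) ` (Omega_n F \<Omega> K \<inter> P i))"
      unfolding Omega_Suc using closedU by (rule closure_minimal)
    moreover have "a \<in> Omega_n F \<Omega> (Suc K)" using a Aom by auto
    ultimately obtain i x where i: "i < m" "x \<in> Omega_n F \<Omega> K" "x \<in> P i" "a = v i + x" by auto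
    have "nn i \<le> K" unfolding K_def using i(1) by (intro member_le_sum) auto
    then have "x \<in> Omega_n F \<Omega> (nn i)" using Omega_anti[OF cl\<Omega> F\<Omega>] i(2) by blast
    moreover have "a - v i = x" using i(4) by simp
    ultimately show False using nn[OF i(1)] i(3) by auto
  qed
  define Z where "Z = (\<Union>i<m. frontier (P i))"
  have Znull: "Z \<in> null_sets lebesgue" unfolding Z_def
    by (rule null_sets_UN'[OF countable_finite[OF finite_lessThan]]) (auto intro: fr)
  define N where "N = (\<Union>l\<in>LL. {x. x + l \<in> Z})"
  have Nnull: "N \<in> null_sets lebesgue" unfolding N_def
    by (rule null_sets_UN'[OF L_countable]) (rule null_transl[OF Znull])
  define Lam where "Lam x = {l \<in> LL. x + l \<in> A}" for x
  have Lamfin: "finite (Lam x)" for x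
  proof -
    have "Lam x \<subseteq> LL \<inter> cball 0 (R + norm x)"
    proof
      fix l assume "l \<in> Lam x"
      then have l: "l \<in> LL" "x + l \<in> A" unfolding Lam_def by auto
      have "norm l = norm ((x + l) - x)" by simp
      also have "\<dots> \<le> norm (x + l) + norm x" by (rule norm_triangle_ineq4)
      also have "\<dots> \<le> R + norm x" using R[OF l(2)] by simp
      finally show "l \<in> LL \<inter> cball 0 (R + norm x)" using l by auto
    qed
    then show ?thesis using L_finite_cball finite_subset by blast
  qed
  define E where "E k = {x. \<exists>T. finite T \<and> T \<subseteq> LL \<and> card T = k \<and> (\<forall>l\<in>T. x + l \<in> A)}" for k
  have Eiff: "x \<in> E k \<longleftrightarrow> k \<le> card (Lam x)" for x k
  proof
    assume "x \<in> E k"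
    then obtain T where T: "finite T" "T \<subseteq> LL" "card T = k" "\<forall>l\<in>T. x + l \<in> A" unfolding E_def by blast
    then have "T \<subseteq> Lam x" unfolding Lam_def by auto
    then show "k \<le> card (Lam x)" using card_mono[OF Lamfin] T(3) by blast
  next
    assume "k \<le> card (Lam x)"
    then obtain T where "T \<subseteq> Lam x" "card T = k" "finite T" by (rule obtain_subset_with_card_n)
    then show "x \<in> E k" unfolding E_def Lam_def by blast
  qed
  have Eper: "(x + l \<in> E k) = (x \<in> E k)" if l: "l \<in> LL" for l x k
  proof -
    have "Lam (x + l) = (\<lambda>s. s - l) ` Lam x"
    proof safe
      fix t assume "t \<in> Lam (x + l)"
      then have "t + l \<in> Lam x" unfolding Lam_def using L_add l by (auto simp: add_ac)
      then show "t \<in> (\<lambda>s. s - l) ` Lam x" by (intro image_eqI[where x="t + l"]) auto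
    next
      fix s assume "s \<in> Lam x" then show "s - l \<in> Lam (x + l)"
        unfolding Lam_def using L_diff l by (auto simp: algebra_simps)
    qed
    then have "card (Lam (x + l)) = card (Lam x)" by (simp add: card_image inj_on_def)
    then show ?thesis using Eiff by simp
  qed
  have Eborel: "E k \<in> sets borel" for k
  proof -
    have eq: "E k = (\<Union>T\<in>{T. finite T \<and> T \<subseteq> LL \<and> card T = k}. \<Inter>l\<in>T. {x. x + l \<in> A})"
      unfolding E_def by blast
    have cnt: "countable {T. finite T \<and> T \<subseteq> LL \<and> card T = k}"
      by (rule countable_subset[OF _ countable_Collect_finite_subset[OF L_countable]]) blast
    have cl: "closed {x. x + l \<in> A}" for l
    proof -
      have "{x. x + l \<in> A} = (+) (- l) ` A"
      proof safe
        fix x assume "x + l \<in> A" then show "x \<in> (+) (- l) ` A" by (intro image_eqI[where x="x+l"]) auto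
      qed auto
      then show ?thesis using closed_translation[OF clA, of "- l"] by metis
    qed
    show ?thesis unfolding eq
      by (rule sets.countable_UN''[OF cnt]) (intro borel_closed closed_INT ballI cl)
  qed
  have Estep: "x \<in> E k" if xN: "x \<notin> N" and xE: "x + v 0 \<in> E k" for x k
  proof -
    obtain T where T: "finite T" "T \<subseteq> LL" "card T = k" "\<forall>l\<in>T. x + v 0 + l \<in> A"
      using xE unfolding E_def by blast
    have "\<forall>l\<in>T. \<exists>i<m. x + v 0 + l - v i \<in> A \<and> x + v 0 + l - v i \<in> P i"
      using T(4) pre by blast
    then obtain ii where ii: "\<And>l. l \<in> T \<Longrightarrow> ii l < m \<and> x + v 0 + l - v (ii l) \<in> A \<and> x + v 0 + l - v (ii l) \<in> P (ii l)"
      by metis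
    define g where "g l = l - (v (ii l) - v 0)" for l
    have gx: "x + g l = x + v 0 + l - v (ii l)" for l unfolding g_def by (simp add: algebra_simps)
    have gL: "g l \<in> LL" if "l \<in> T" for l
      unfolding g_def using ii[OF that] T(2) that m_def by (intro L_diff L_b) auto
    have inj: "inj_on g T"
    proof (rule inj_onI)
      fix l l' assume l: "l \<in> T" "l' \<in> T" "g l = g l'"
      show "l = l'"
      proof (cases "ii l = ii l'")
        case True then show ?thesis using l(3) unfolding g_def by simp
      next
        case False
        have a: "x + g l \<in> P (ii l)" using ii[OF l(1)] unfolding gx by blast
        have b': "x + g l' \<in> P (ii l')" using ii[OF l(2)] unfolding gx by blast
        have b: "x + g l \<in> P (ii l')" using b' l(3) by simp
        have i1: "ii l < m" using ii[OF l(1)] by blast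
        have i2: "ii l' < m" using ii[OF l(2)] by blast
        have "x + g l \<in> frontier (P (ii l))" using Pdisj[OF i1 i2 False] a b by blast
        then have "x + g l \<in> Z" unfolding Z_def using i1 by blast
        then have "x \<in> N" using gL[OF l(1)] unfolding N_def by blast
        then show ?thesis using xN by blast
      qed
    qed
    have "g ` T \<subseteq> LL" using gL by blast
    moreover have "finite (g ` T)" using T(1) by simp
    moreover have "card (g ` T) = k" using card_image[OF inj] T(3) by simp
    moreover have "\<forall>l\<in>g ` T. x + l \<in> A"
    proof
      fix l' assume "l' \<in> g ` T"
      then obtain l where l: "l \<in> T" "l' = g l" by blast
      show "x + l' \<in> A" unfolding l(2) gx using ii[OF l(1)] by blast
    qed
    ultimately show "x \<in> E k" unfolding E_def by blast
  qed
  have dich: "E k \<in> null_sets lebesgue \<or> UNIV - E k \<in> null_sets lebesgue" for k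
  proof -
    define G where "G = {x. x - (- v 0) \<in> E k}"
    have Eleb: "E k \<in> sets lebesgue" using Eborel borel_leb by blast
    have Gleb: "G \<in> sets lebesgue" unfolding G_def using borel_transl_sub[OF Eborel] borel_leb by blast
    have perG: "(x + l \<in> G) = (x \<in> G)" if l: "l \<in> LL" for l x
    proof -
      have e: "x + l + v 0 = x + v 0 + l" by (simp add: add_ac)
      show ?thesis unfolding G_def mem_Collect_eq diff_minus_eq_add e using Eper[OF l, of "x + v 0" k] by simp
    qed
    have GE: "G - E k \<subseteq> N" unfolding G_def using Estep by auto
    have GEnull: "G - E k \<in> null_sets lebesgue"
      by (rule null_sets_subset[OF Nnull _ GE]) (intro sets.Diff Gleb Eleb)
    have eqm: "emeasure lebesgue (G \<inter> D) = emeasure lebesgue (E k \<inter> D)"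
      unfolding G_def by (rule shift_inv[OF Eleb]) (rule Eper)
    have EG: "E k - G \<in> null_sets lebesgue"
      by (rule diff_null[OF Eleb Gleb Eper perG GEnull eqm])
    define T where "T n = {x. x + real_of_int n *\<^sub>R v 0 \<in> E k}" for n :: int
    have Tmeas: "T n \<in> sets lebesgue" for n
      unfolding T_def using borel_transl[OF Eborel] borel_leb by blast
    have Tstep: "(T n - T (n+1)) \<union> (T (n+1) - T n) \<in> null_sets lebesgue" for n
    proof -
      have "(T n - T (n+1)) \<union> (T (n+1) - T n) = {x. x + real_of_int n *\<^sub>R v 0 \<in> (E k - G) \<union> (G - E k)}"
        unfolding T_def G_def by (auto simp: algebra_simps)
      also have "\<dots> \<in> null_sets lebesgue" by (rule null_transl) (intro null_sets.Un EG GEnull)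
      finally show ?thesis .
    qed
    have Tn: "(T n - T 0) \<union> (T 0 - T n) \<in> null_sets lebesgue" for n
    proof (rule int_induct[where k=0 and P="\<lambda>n. (T n - T 0) \<union> (T 0 - T n) \<in> null_sets lebesgue"])
      show "(T 0 - T 0) \<union> (T 0 - T 0) \<in> null_sets lebesgue" by simp
    next
      fix i :: int assume IH: "(T i - T 0) \<union> (T 0 - T i) \<in> null_sets lebesgue"
      show "(T (i + 1) - T 0) \<union> (T 0 - T (i + 1)) \<in> null_sets lebesgue"
        by (rule null_sets_subset[OF null_sets.Un[OF Tstep[of i] IH]])
          (auto intro!: sets.Un sets.Diff Tmeas)
    next
      fix i :: int assume IH: "(T i - T 0) \<union> (T 0 - T i) \<in> null_sets lebesgue"
      have st: "(T (i - 1) - T i) \<union> (T i - T (i - 1)) \<in> null_sets lebesgue"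
        using Tstep[of "i - 1"] by simp
      show "(T (i - 1) - T 0) \<union> (T 0 - T (i - 1)) \<in> null_sets lebesgue"
        by (rule null_sets_subset[OF null_sets.Un[OF st IH]])
          (auto intro!: sets.Un sets.Diff Tmeas)
    qed
    define W where "W = {x. \<forall>n::int. x + real_of_int n *\<^sub>R v 0 \<in> E k}"
    have WT: "W = (\<Inter>n. T n)" unfolding W_def T_def by auto
    have Wmeas: "W \<in> sets lebesgue" unfolding WT by (rule sets.countable_INT) (auto intro: Tmeas)
    have WE: "W \<subseteq> E k" unfolding W_def by (auto dest: spec[of _ 0])
    have EW: "E k - W \<subseteq> (\<Union>n. (T n - T 0) \<union> (T 0 - T n))" unfolding W_def T_def by auto
    have EWnull: "E k - W \<in> null_sets lebesgue"
      by (rule null_sets_subset[OF null_sets_UN[OF Tn] _ EW]) (intro sets.Diff Eleb Wmeas)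
    have Winv: "(\<lambda>x. x + v 0) ` W = W"
    proof (rule image_transl_eq)
      fix x
      have sh: "x + v 0 + real_of_int n *\<^sub>R v 0 = x + real_of_int (n + 1) *\<^sub>R v 0" for n
        by (simp add: algebra_simps)
      show "(x + v 0 \<in> W) = (x \<in> W)"
        unfolding W_def mem_Collect_eq sh
      proof
        assume h: "\<forall>n. x + real_of_int (n + 1) *\<^sub>R v 0 \<in> E k"
        show "\<forall>n. x + real_of_int n *\<^sub>R v 0 \<in> E k"
        proof
          fix n :: int show "x + real_of_int n *\<^sub>R v 0 \<in> E k" using h[rule_format, of "n - 1"] by simp
        qed
      next
        assume h: "\<forall>n. x + real_of_int n *\<^sub>R v 0 \<in> E k"
        show "\<forall>n. x + real_of_int (n + 1) *\<^sub>R v 0 \<in> E k"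
        proof
          fix n :: int show "x + real_of_int (n + 1) *\<^sub>R v 0 \<in> E k" using h by blast
        qed
      qed
    qed
    have WL: "\<forall>l\<in>LL. (\<lambda>x. x + l) ` W = W"
    proof
      fix l assume l: "l \<in> LL"
      show "(\<lambda>x. x + l) ` W = W"
      proof (rule image_transl_eq)
        fix x
        have eqn: "x + l + real_of_int n *\<^sub>R v 0 = (x + real_of_int n *\<^sub>R v 0) + l" for n
          by (simp add: add_ac)
        show "(x + l \<in> W) = (x \<in> W)" unfolding W_def mem_Collect_eq eqn Eper[OF l] ..
      qed
    qed
    have "W \<in> null_sets lebesgue \<or> UNIV - W \<in> null_sets lebesgue"
      using assms(4) Wmeas WL Winv unfolding rotation_ergodic_def by blast
    then show ?thesis
    proof
      assume "W \<in> null_sets lebesgue"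
      then have "E k \<in> null_sets lebesgue"
        by (rule null_sets_subset[OF null_sets.Un[OF _ EWnull] Eleb]) auto
      then show ?thesis by blast
    next
      assume "UNIV - W \<in> null_sets lebesgue"
      then have "UNIV - E k \<in> null_sets lebesgue"
        by (rule null_sets_subset) (use WE Eleb in auto)
      then show ?thesis by blast
    qed
  qed
  have E0: "E 0 = UNIV" unfolding E_def by auto
  have UNIVnn: "(UNIV :: 'a set) \<notin> null_sets lebesgue"
    by (simp add: null_sets_def)
  have ex: "\<exists>k. UNIV - E k \<notin> null_sets lebesgue"
  proof (rule ccontr)
    assume "\<not> ?thesis"
    then have all: "\<And>k. UNIV - E k \<in> null_sets lebesgue" by blast
    have eqU: "(\<Union>k. UNIV - E k) = UNIV"
    proof safe
      fix x
      have "x \<notin> E (Suc (card (Lam x)))" using Eiff by simp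
      then show "x \<in> (\<Union>k. UNIV - E k)" by blast
    qed
    have nU: "(\<Union>k. UNIV - E k) \<in> null_sets lebesgue" by (intro null_sets_UN all)
    then have "(UNIV :: 'a set) \<in> null_sets lebesgue" unfolding eqU .
    then show False using UNIVnn by blast
  qed
  define k0 where "k0 = (LEAST k. UNIV - E k \<notin> null_sets lebesgue)"
  have k0: "UNIV - E k0 \<notin> null_sets lebesgue" using LeastI_ex[OF ex] unfolding k0_def .
  have k0ne: "k0 \<noteq> 0" using k0 E0 by auto
  have Ek0: "E k0 \<in> null_sets lebesgue" using dich[of k0] k0 by blast
  have prev: "UNIV - E (k0 - 1) \<in> null_sets lebesgue"
    using not_less_Least[of "k0 - 1" "\<lambda>k. UNIV - E k \<notin> null_sets lebesgue"] k0ne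
    unfolding k0_def[symmetric] by simp
  show ?thesis
    unfolding F_def[symmetric] A_def[symmetric]
  proof (intro exI[of _ "k0 - 1"] AE_I'[OF null_sets.Un[OF prev Ek0]] subsetI)
    fix x assume "x \<in> {x \<in> space lebesgue. \<not> (finite (fiber LL A x) \<and> card (fiber LL A x) = k0 - 1)}"
    then have nx: "\<not> (finite (fiber LL A x) \<and> card (fiber LL A x) = k0 - 1)" by simp
    have fib: "fiber LL A x = (\<lambda>l. x + l) ` Lam x" unfolding fiber_def Lam_def by auto
    have "finite (fiber LL A x)" using fib Lamfin by simp
    moreover have "card (fiber LL A x) = card (Lam x)" using fib by (simp add: card_image inj_on_def)
    ultimately have "card (Lam x) \<noteq> k0 - 1" using nx by simp
    then have "x \<notin> E (k0 - 1) \<or> x \<in> E k0" using Eiff k0ne by auto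
    then show "x \<in> (UNIV - E (k0 - 1)) \<union> E k0" by blast
  qed
qed

end
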